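(* Let $\mathcal{L}\subset\mathbb{S}^n$ be a regular linear subspace. The following two conditions are equivalent: (a) there exists a non-zero $K\in\mathcal{L}$ such that $\mathcal{L}\subseteq(\{K\}^\perp)^{-1}$; (b) there exists a non-zero $K\in\mathcal{L}$ such that $\det(P+tK)=\det(P)$ for all $P\in\mathcal{L}$ and all $t\in\mathbb{C}$.
   Context: $\mathbb{S}^n$ denotes the space of complex symmetric $n\times n$ matrices. A linear subspace $\mathcal{L}$ is regular if it contains a full-rank matrix. For a linear subspace $\mathcal{M}\subseteq\mathbb{S}^n$, $\mathcal{M}^{-1}$ denotes its reciprocal variety, the Zariski closure of the set of inverses of invertible matrices in $\mathcal{M}$. $\{K\}^\perp=\{\Sigma\in\mathbb{S}^n:\mathrm{tr}(K\Sigma)=0\}$. *)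

theory Defs
  imports "HOL-Analysis.Analysis"
begin

definition cmat_scale :: "complex \<Rightarrow> complex^'n^'n \<Rightarrow> complex^'n^'n" where
  "cmat_scale c A = (\<chi> i j. c * A $ i $ j)"

definition sym_matrices :: "(complex^'n^'n) set" where
  "sym_matrices = {A. transpose A = A}"

definition sym_linear_subspace :: "(complex^'n^'n) set \<Rightarrow> bool" where
  "sym_linear_subspace L \<longleftrightarrow> L \<subseteq> sym_matrices \<and> 0 \<in> L \<and>
     (\<forall>A\<in>L. \<forall>B\<in>L. A + B \<in> L) \<and> (\<forall>c. \<forall>A\<in>L. cmat_scale c A \<in> L)"

definition regular_subspace :: "(complex^'n^'n) set \<Rightarrow> bool" where
  "regular_subspace L \<longleftrightarrow> (\<exists>A\<in>L. invertible A)"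

inductive matpoly :: "(complex^'n^'n \<Rightarrow> complex) \<Rightarrow> bool" where
  mp_const: "matpoly (\<lambda>_. c)"
| mp_entry: "matpoly (\<lambda>A. A $ i $ j)"
| mp_add: "matpoly p \<Longrightarrow> matpoly q \<Longrightarrow> matpoly (\<lambda>A. p A + q A)"
| mp_mult: "matpoly p \<Longrightarrow> matpoly q \<Longrightarrow> matpoly (\<lambda>A. p A * q A)"

definition zariski_closure :: "(complex^'n^'n) set \<Rightarrow> (complex^'n^'n) set" where
  "zariski_closure S = {A. \<forall>p. matpoly p \<and> (\<forall>B\<in>S. p B = 0) \<longrightarrow> p A = 0}"

definition reciprocal_variety :: "(complex^'n^'n) set \<Rightarrow> (complex^'n^'n) set" where
  "reciprocal_variety M = zariski_closure {matrix_inv A | A. A \<in> M \<and> invertible A}"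

definition trace_perp :: "complex^'n^'n \<Rightarrow> (complex^'n^'n) set" where
  "trace_perp K = {S \<in> sym_matrices. trace (K ** S) = 0}"

end

theory Submission
  imports Defs "HOL-Computational_Algebra.Polynomial"
begin

lemma matpoly_sum: "finite S \<Longrightarrow> (\<And>x. x \<in> S \<Longrightarrow> matpoly (f x)) \<Longrightarrow> matpoly (\<lambda>A. \<Sum>x\<in>S. f x A)"
proof (induction S rule: finite_induct)
  case empty then show ?case by (simp add: mp_const)
next
  case (insert a S) then show ?case by (simp add: mp_add)
qed

lemma matpoly_prod: "finite S \<Longrightarrow> (\<And>x. x \<in> S \<Longrightarrow> matpoly (f x)) \<Longrightarrow> matpoly (\<lambda>A. \<Prod>x\<in>S. f x A)"
proof (induction S rule: finite_induct)
  case empty then show ?case by (simp add: mp_const)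
next
  case (insert a S) then show ?case by (simp add: mp_mult)
qed

lemma matpoly_det:
  fixes M :: "complex^'n^'n \<Rightarrow> complex^'n^'n"
  assumes "\<And>i j. matpoly (\<lambda>A. M A $ i $ j)"
  shows "matpoly (\<lambda>A. det (M A))"
  unfolding det_def
  by (intro matpoly_sum matpoly_prod mp_mult mp_const assms) auto

lemma matpoly_line:
  assumes "matpoly q"
  shows "\<exists>r. \<forall>s. q (X + cmat_scale s Y) = poly r s"
  using assms
proof induction
  case (mp_const c) then show ?case by (intro exI[of _ "[:c:]"]) simp
next
  case (mp_entry i j) then show ?case
    by (intro exI[of _ "[:X$i$j, Y$i$j:]"]) (simp add: cmat_scale_def algebra_simps)
next
  case (mp_add p q) then show ?case by (metis poly_add)
next
  case (mp_mult p q) then show ?case by (metis poly_mult)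
qed

lemma minv_props:
  fixes A :: "'a::field^'n^'n"
  assumes "invertible A"
  shows "A ** matrix_inv A = mat 1" "matrix_inv A ** A = mat 1"
proof -
  have "\<exists>A'. A ** A' = mat 1 \<and> A' ** A = mat 1" using assms invertible_def by blast
  then have "A ** matrix_inv A = mat 1 \<and> matrix_inv A ** A = mat 1"
    unfolding matrix_inv_def by (rule someI_ex)
  then show "A ** matrix_inv A = mat 1" "matrix_inv A ** A = mat 1" by auto
qed

lemma minv_unique:
  fixes A B :: "'a::field^'n^'n"
  assumes "A ** B = mat 1" "B ** A = mat 1"
  shows "matrix_inv A = B"
proof -
  have i: "invertible A" using assms invertible_def by blast
  have "matrix_inv A = matrix_inv A ** (A ** B)" using assms by simp
  also have "\<dots> = (matrix_inv A ** A) ** B" by (simp add: matrix_mul_assoc)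
  also have "\<dots> = B" using minv_props[OF i] by simp
  finally show ?thesis .
qed

lemma minv_invertible:
  fixes A :: "'a::field^'n^'n"
  assumes "invertible A" shows "invertible (matrix_inv A)" "matrix_inv (matrix_inv A) = A"
  using minv_props[OF assms] invertible_def minv_unique by blast+

lemma minv_transpose:
  fixes A :: "'a::field^'n^'n"
  assumes "invertible A" shows "transpose (matrix_inv A) = matrix_inv (transpose A)"
proof -
  have "transpose A ** transpose (matrix_inv A) = mat 1"
    by (metis matrix_transpose_mul minv_props(2)[OF assms] transpose_mat)
  moreover have "transpose (matrix_inv A) ** transpose A = mat 1"
    by (metis matrix_transpose_mul minv_props(1)[OF assms] transpose_mat)
  ultimately show ?thesis using minv_unique by metis
qed

definition rowrep :: "complex^'n^'n \<Rightarrow> complex^'n^'n \<Rightarrow> 'n \<Rightarrow> complex^'n^'n" where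
  "rowrep K A i = (\<chi> r c. if r = i then K$i$c else A$r$c)"

definition Dk :: "complex^'n^'n \<Rightarrow> complex^'n^'n \<Rightarrow> complex" where
  "Dk K A = (\<Sum>i\<in>UNIV. det (rowrep K A i))"

lemma matpoly_Dk: "matpoly (Dk K)"
proof -
  have "matpoly (\<lambda>A. \<Sum>i\<in>UNIV. det (rowrep K A i))"
  proof (intro matpoly_sum matpoly_det)
    fix i r c
    show "matpoly (\<lambda>A. rowrep K A i $ r $ c)"
      by (cases "r = i") (simp_all add: rowrep_def mp_const mp_entry)
  qed auto
  then show ?thesis unfolding Dk_def[abs_def] .
qed

lemma Dk_inv:
  assumes inv: "invertible A"
  shows "Dk K A = det A * trace (K ** matrix_inv A)"
proof -
  have "det (rowrep K A i) = (K ** matrix_inv A)$i$i * det A" for i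
  proof -
    define x where "x = row i K v* matrix_inv A"
    have "(\<Sum>j\<in>UNIV. x$j *s row j A) = x v* A"
      by (simp add: vec_eq_iff vector_matrix_mult_def row_def sum_component mult.commute)
    also have "\<dots> = row i K"
      unfolding x_def by (simp add: vector_matrix_mul_assoc minv_props[OF inv])
    finally have e: "(\<Sum>j\<in>UNIV. x$j *s row j A) = row i K" .
    have "rowrep K A i = (\<chi> r. if r = i then (\<Sum>j\<in>UNIV. x$j *s row j A) else row r A)"
      unfolding e by (simp add: rowrep_def vec_eq_iff row_def)
    then have "det (rowrep K A i) = x$i * det A"
      using cramer_lemma_transpose[of i x A] by simp
    moreover have "x$i = (K ** matrix_inv A)$i$i"
      by (simp add: x_def vector_matrix_mult_def matrix_matrix_mult_def row_def mult.commute)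
    ultimately show ?thesis by simp
  qed
  then show ?thesis unfolding Dk_def trace_def by (simp add: sum_distrib_left mult.commute)
qed

lemma det_line_deriv:
  "((\<lambda>t. det (P + cmat_scale t K)) has_field_derivative Dk K (P + cmat_scale t0 K)) (at t0)"
proof -
  let ?S = "{p. p permutes (UNIV::'n set)}"
  have f: "(\<lambda>t. det (P + cmat_scale t K)) =
     (\<lambda>t. \<Sum>p\<in>?S. of_int (sign p) * (\<Prod>i\<in>UNIV. P$i$p i + t * K$i$p i))"
    by (simp add: det_def cmat_scale_def)
  define M where "M = P + cmat_scale t0 K"
  have d: "((\<lambda>t. \<Sum>p\<in>?S. of_int (sign p) * (\<Prod>i\<in>UNIV. P$i$p i + t * K$i$p i)) has_field_derivative
     (\<Sum>p\<in>?S. of_int (sign p) * (\<Sum>i\<in>UNIV. K$i$p i * (\<Prod>j\<in>UNIV-{i}. P$j$p j + t0 * K$j$p j)))) (at t0)"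
    by (intro DERIV_sum DERIV_cmult has_field_derivative_prod)
       (auto intro!: derivative_eq_intros)
  have "Dk K M = (\<Sum>i\<in>UNIV. \<Sum>p\<in>?S. of_int (sign p) * (K$i$p i * (\<Prod>j\<in>UNIV-{i}. M$j$p j)))"
    unfolding Dk_def det_def
  proof (intro sum.cong refl)
    fix i p
    have "(\<Prod>j\<in>UNIV. rowrep K M i $ j $ p j) = rowrep K M i $ i $ p i * (\<Prod>j\<in>UNIV-{i}. rowrep K M i $ j $ p j)"
      by (simp add: prod.remove)
    also have "\<dots> = K$i$p i * (\<Prod>j\<in>UNIV-{i}. M$j$p j)"
      by (simp add: rowrep_def)
    finally show "of_int (sign p) * (\<Prod>j\<in>UNIV. rowrep K M i $ j $ p j) = of_int (sign p) * (K$i$p i * (\<Prod>j\<in>UNIV-{i}. M$j$p j))"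
      by simp
  qed
  also have "\<dots> = (\<Sum>p\<in>?S. of_int (sign p) * (\<Sum>i\<in>UNIV. K$i$p i * (\<Prod>j\<in>UNIV-{i}. P$j$p j + t0 * K$j$p j)))"
    by (subst sum.swap) (simp add: sum_distrib_left M_def cmat_scale_def)
  finally show ?thesis using d f M_def by simp
qed

lemma cmat_scale_0[simp]: "cmat_scale 0 K = 0"
  by (simp add: cmat_scale_def vec_eq_iff)

lemma Dk_vanish:
  assumes "B \<in> reciprocal_variety (trace_perp K)"
  shows "Dk K B = 0"
proof -
  have "Dk K C = 0" if hC: "C \<in> {matrix_inv A | A. A \<in> trace_perp K \<and> invertible A}" for C
  proof -
    obtain S where S: "C = matrix_inv S" "S \<in> trace_perp K" "invertible S" using hC by blast
    have "Dk K C = det C * trace (K ** S)"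
      using Dk_inv[OF minv_invertible(1)[OF S(3)]] S minv_invertible(2)[OF S(3)] by simp
    then show ?thesis using S(2) by (simp add: trace_perp_def)
  qed
  then show ?thesis using assms matpoly_Dk unfolding reciprocal_variety_def zariski_closure_def by blast
qed

lemma line_in_L:
  assumes L: "sym_linear_subspace L" and "A \<in> L" "P \<in> L"
  shows "A + cmat_scale s (P - A) \<in> L"
proof -
  have "A + cmat_scale s (P - A) = cmat_scale (1 - s) A + cmat_scale s P"
    by (simp add: cmat_scale_def vec_eq_iff algebra_simps)
  then show ?thesis using assms unfolding sym_linear_subspace_def by simp
qed

theorem lemma6p5:
  fixes L :: "(complex^'n^'n) set"
  assumes "sym_linear_subspace L" and "regular_subspace L"
  shows "(\<exists>K\<in>L. K \<noteq> 0 \<and> L \<subseteq> reciprocal_variety (trace_perp K)) \<longleftrightarrow>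
         (\<exists>K\<in>L. K \<noteq> 0 \<and> (\<forall>P\<in>L. \<forall>t::complex. det (P + cmat_scale t K) = det P))"
proof
  assume "\<exists>K\<in>L. K \<noteq> 0 \<and> L \<subseteq> reciprocal_variety (trace_perp K)"
  then obtain K where K: "K \<in> L" "K \<noteq> 0" "L \<subseteq> reciprocal_variety (trace_perp K)" by blast
  have "\<forall>P\<in>L. \<forall>t::complex. det (P + cmat_scale t K) = det P"
  proof (intro ballI allI)
    fix P t assume P: "P \<in> L"
    have "\<exists>c. \<forall>x\<in>UNIV. det (P + cmat_scale x K) = c"
    proof (rule has_field_derivative_zero_constant)
      fix x :: complex
      have "P + cmat_scale x K \<in> L" using assms(1) P K(1) unfolding sym_linear_subspace_def by blast
      then have "Dk K (P + cmat_scale x K) = 0" using K(3) Dk_vanish by blast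
      then show "((\<lambda>x. det (P + cmat_scale x K)) has_field_derivative 0) (at x within UNIV)"
        using det_line_deriv[of P K x] by simp
    qed simp
    then obtain c where "\<And>x. det (P + cmat_scale x K) = c" by blast
    from this[of t] this[of 0] show "det (P + cmat_scale t K) = det P" by simp
  qed
  then show "\<exists>K\<in>L. K \<noteq> 0 \<and> (\<forall>P\<in>L. \<forall>t::complex. det (P + cmat_scale t K) = det P)"
    using K by blast
next
  assume "\<exists>K\<in>L. K \<noteq> 0 \<and> (\<forall>P\<in>L. \<forall>t::complex. det (P + cmat_scale t K) = det P)"
  then obtain K where K: "K \<in> L" "K \<noteq> 0" "\<And>P t. P \<in> L \<Longrightarrow> det (P + cmat_scale t K) = det P" by blast
  define S where "S = {matrix_inv A | A. A \<in> trace_perp K \<and> invertible A}"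
  have invcase: "P \<in> S" if P: "P \<in> L" "invertible P" for P
  proof -
    have "(\<lambda>t. det (P + cmat_scale t K)) = (\<lambda>t. det P)" using K(3)[OF P(1)] by (rule ext)
    then have "((\<lambda>t. det P) has_field_derivative Dk K P) (at 0)"
      using det_line_deriv[of P K 0] by simp
    moreover have "((\<lambda>t. det P) has_field_derivative 0) (at 0)" by simp
    ultimately have "Dk K P = 0" using DERIV_unique by blast
    moreover have "det P \<noteq> 0" using P(2) invertible_det_nz by blast
    ultimately have tr: "trace (K ** matrix_inv P) = 0" using Dk_inv[OF P(2), of K] by simp
    have "transpose P = P" using P(1) assms(1) unfolding sym_linear_subspace_def sym_matrices_def by blast
    then have "transpose (matrix_inv P) = matrix_inv P" using minv_transpose[OF P(2)] by simp
    then have "matrix_inv P \<in> trace_perp K" using tr by (simp add: trace_perp_def sym_matrices_def)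
    moreover have "P = matrix_inv (matrix_inv P)" using minv_invertible(2)[OF P(2)] by simp
    ultimately show ?thesis unfolding S_def using minv_invertible(1)[OF P(2)] by blast
  qed
  obtain A where A: "A \<in> L" "invertible A" using assms(2) unfolding regular_subspace_def by blast
  have "L \<subseteq> reciprocal_variety (trace_perp K)"
  proof
    fix P assume P: "P \<in> L"
    show "P \<in> reciprocal_variety (trace_perp K)"
      unfolding reciprocal_variety_def zariski_closure_def S_def[symmetric]
    proof (intro CollectI allI impI, elim conjE)
      fix q assume q: "matpoly q" "\<forall>B\<in>S. q B = 0"
      obtain r where r: "\<And>s. q (A + cmat_scale s (P - A)) = poly r s" using matpoly_line[OF q(1)] by blast
      have "matpoly (\<lambda>B. det B)" by (rule matpoly_det[of "\<lambda>B. B", OF mp_entry])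
      then obtain r0 where r0: "\<And>s. det (A + cmat_scale s (P - A)) = poly r0 s"
        using matpoly_line by blast
      have "poly r0 0 \<noteq> 0" using r0[of 0] A(2) invertible_det_nz by (metis add.right_neutral cmat_scale_0)
      then have r00: "r0 \<noteq> 0" by auto
      have sub: "{s. poly r s \<noteq> 0} \<subseteq> {s. poly r0 s = 0}"
      proof
        fix s assume "s \<in> {s. poly r s \<noteq> 0}"
        moreover have "poly r0 s \<noteq> 0 \<Longrightarrow> poly r s = 0"
        proof -
          assume "poly r0 s \<noteq> 0"
          then have "invertible (A + cmat_scale s (P - A))" unfolding invertible_det_nz r0 .
          then have "A + cmat_scale s (P - A) \<in> S" using invcase[OF line_in_L[OF assms(1) A(1) P]] by blast
          then have "q (A + cmat_scale s (P - A)) = 0" using q(2) by blast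
          then show ?thesis using r[of s] by simp
        qed
        ultimately show "s \<in> {s. poly r0 s = 0}" by auto
      qed
      have "r = 0"
      proof (rule ccontr)
        assume "r \<noteq> 0"
        then have "finite {s. poly r s = 0}" by (rule poly_roots_finite)
        moreover have "finite {s. poly r s \<noteq> 0}" using sub poly_roots_finite[OF r00] finite_subset by blast
        ultimately have "finite ({s. poly r s = 0} \<union> {s. poly r s \<noteq> 0})" by simp
        moreover have "{s. poly r s = 0} \<union> {s. poly r s \<noteq> 0} = (UNIV :: complex set)" by blast
        ultimately show False using infinite_UNIV_char_0[where 'a=complex] by simp
      qed
      have "A + cmat_scale 1 (P - A) = P" by (simp add: cmat_scale_def vec_eq_iff)
      then show "q P = 0" using r[of 1] \<open>r = 0\<close> by simp
    qed
  qed
  then show "\<exists>K\<in>L. K \<noteq> 0 \<and> L \<subseteq> reciprocal_variety (trace_perp K)" using K by blast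
qed

end
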